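(* In the hyperfractal mobile network model with constant node speed $v$, for all positive integers $n_i,n_j$, $$I(n_i,n_j)\le \frac{1}{v(n_i+n_j)}.$$
   Context: The map is the unit square; streets are horizontal or vertical segments of length $1$ (the lines of the hyperfractal support $\mathcal{X}_l=\{(b2^{-(l+1)},y): b \text{ odd},\, 1\le b\le 2^{l+1}-1, y\in[0,1]\}\cup\{(x,b2^{-(l+1)}): b \text{ odd},\, 1\le b\le 2^{l+1}-1, x\in[0,1]\}$). Mobile nodes on a street are uniformly located (Poisson) on the street and move along it at constant speed $v$ in either direction (streets bidirectional). Canyon effect: a node transmits only to nodes on its own street; a packet passes to a perpendicular street only when a node carrying it reaches the intersection, at which moment it can transmit to a node on the perpendicular street. $I(n_i,n_j)$ denotes the average time a packet takes to pass from a street containing $n_i$ nodes to an intersecting street containing $n_j$ nodes, assuming all nodes on the first street carry the packet. *)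

theory Defs
  imports "HOL-Probability.Probability"
begin

text \<open>Model of one node on a street of length 1 (coordinate in [0,1]).
  A node is described by its position x (uniform on [0,1]) and its direction
  of motion (True = increasing coordinate, False = decreasing), uniform.
  Streets are traversed cyclically (position taken modulo the street length 1),
  so the time for a node at x with direction d to reach the point c of its
  street is the following.\<close>

definition node_space :: "(real \<times> bool) measure" where
  "node_space = uniform_measure lborel {0..1} \<Otimes>\<^sub>M uniform_count_measure (UNIV :: bool set)"

definition hit_time :: "real \<Rightarrow> real \<Rightarrow> real \<times> bool \<Rightarrow> real" where
  "hit_time v c p = (if snd p then frac (c - fst p) else frac (fst p - c)) / v"

text \<open>Nodes 0..ni-1 are on the first street (intersection at coordinate a of that
  street), nodes ni..ni+nj-1 on the second, perpendicular street (intersection at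
  coordinate b of that street). All nodes of the first street carry the packet;
  the packet passes to the second street as soon as some node of either street is
  at the intersection.\<close>

definition passage_time :: "real \<Rightarrow> nat \<Rightarrow> nat \<Rightarrow> real \<Rightarrow> real \<Rightarrow> (nat \<Rightarrow> real \<times> bool) \<Rightarrow> real" where
  "passage_time v ni nj a b \<omega> =
     Min ((\<lambda>k. if k < ni then hit_time v a (\<omega> k) else hit_time v b (\<omega> k)) ` {..<ni + nj})"

definition I_pass :: "real \<Rightarrow> nat \<Rightarrow> nat \<Rightarrow> real \<Rightarrow> real \<Rightarrow> real" where
  "I_pass v ni nj a b =
     (\<integral>\<omega>. passage_time v ni nj a b \<omega> \<partial>(PiM {..<ni + nj} (\<lambda>_. node_space)))"

end

theory Submission
  imports Defs
begin

lemma frac_cases: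
  fixes y :: real assumes "-1 \<le> y" "y \<le> 1"
  shows "frac y = y \<or> frac y = y + 1 \<or> frac y = y - 1"
proof -
  have a: "-1 \<le> \<lfloor>y\<rfloor>" "\<lfloor>y\<rfloor> \<le> 1"
    using assms by (auto simp: floor_le_iff le_floor_iff)
  have "\<lfloor>y\<rfloor> \<in> {-1,0,1}" 
  proof -
    obtain k where k: "k = \<lfloor>y\<rfloor>" by simp
    have "k = -1 \<or> k = 0 \<or> k = 1" using a unfolding k[symmetric] by linarith
    thus ?thesis using k by auto
  qed
  then show ?thesis by (auto simp: frac_def)
qed

lemma frac_rng: "0 \<le> frac (y::real) \<and> frac y < 1"
  by (simp add: frac_lt_1)

lemma len1:
  assumes c: "0 \<le> c" "c \<le> 1" and s: "0 \<le> s" "s < 1"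
  shows "emeasure lborel ({0..1} \<inter> {x. s < frac (c - x)}) \<le> ennreal (1 - s)"
proof (cases "s \<le> c")
  case True
  have "{0..1} \<inter> {x. s < frac (c - x)} \<subseteq> {0..<c-s} \<union> {c<..1}"
  proof
    fix x assume x: "x \<in> {0..1} \<inter> {x. s < frac (c - x)}"
    show "x \<in> {0..<c-s} \<union> {c<..1}"
    proof (rule ccontr)
      assume "x \<notin> {0..<c-s} \<union> {c<..1}"
      with x have "c - s \<le> x" "x \<le> c" by auto
      with x c s frac_cases[of "c - x"] frac_rng[of "c-x"] show False by auto
    qed
  qed
  hence "emeasure lborel ({0..1} \<inter> {x. s < frac (c - x)}) \<le> emeasure lborel ({0..<c-s} \<union> {c<..1})"
    by (intro emeasure_mono) auto
  also have "\<dots> \<le> emeasure lborel {0..<c-s} + emeasure lborel {c<..1}"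
    by (intro emeasure_subadditive) auto
  also have "\<dots> = ennreal (1 - s)"
    using True c s by (simp add: ennreal_plus[symmetric])
  finally show ?thesis .
next
  case False
  have "{0..1} \<inter> {x. s < frac (c - x)} \<subseteq> {c<..<c+1-s}"
  proof
    fix x assume x: "x \<in> {0..1} \<inter> {x. s < frac (c - x)}"
    show "x \<in> {c<..<c+1-s}"
    proof (rule ccontr)
      assume "x \<notin> {c<..<c+1-s}"
      with x have "x \<le> c \<or> c + 1 - s \<le> x" by auto
      with x c s False frac_cases[of "c - x"] frac_rng[of "c-x"] show False by auto
    qed
  qed
  hence "emeasure lborel ({0..1} \<inter> {x. s < frac (c - x)}) \<le> emeasure lborel {c<..<c+1-s}"
    by (intro emeasure_mono) auto
  also have "\<dots> = ennreal (1 - s)"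
    using False c s by simp
  finally show ?thesis .
qed

lemma len2:
  assumes c: "0 \<le> c" "c \<le> 1" and s: "0 \<le> s" "s < 1"
  shows "emeasure lborel ({0..1} \<inter> {x. s < frac (x - c)}) \<le> ennreal (1 - s)"
proof (cases "c + s \<le> 1")
  case True
  have "{0..1} \<inter> {x. s < frac (x - c)} \<subseteq> {0..<c} \<union> {c+s<..1}"
  proof
    fix x assume x: "x \<in> {0..1} \<inter> {x. s < frac (x - c)}"
    show "x \<in> {0..<c} \<union> {c+s<..1}"
    proof (rule ccontr)
      assume "x \<notin> {0..<c} \<union> {c+s<..1}"
      with x have "c \<le> x" "x \<le> c + s" by auto
      with x c s frac_cases[of "x - c"] frac_rng[of "x - c"] show False by auto
    qed
  qed
  hence "emeasure lborel ({0..1} \<inter> {x. s < frac (x - c)}) \<le> emeasure lborel ({0..<c} \<union> {c+s<..1})"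
    by (intro emeasure_mono) auto
  also have "\<dots> \<le> emeasure lborel {0..<c} + emeasure lborel {c+s<..1}"
    by (intro emeasure_subadditive) auto
  also have "\<dots> = ennreal (1 - s)"
    using True c s by (simp add: ennreal_plus[symmetric])
  finally show ?thesis .
next
  case False
  have "{0..1} \<inter> {x. s < frac (x - c)} \<subseteq> {c+s-1<..<c}"
  proof
    fix x assume x: "x \<in> {0..1} \<inter> {x. s < frac (x - c)}"
    show "x \<in> {c+s-1<..<c}"
    proof (rule ccontr)
      assume "x \<notin> {c+s-1<..<c}"
      with x have "x \<le> c + s - 1 \<or> c \<le> x" by auto
      with x c s False frac_cases[of "x - c"] frac_rng[of "x - c"] show False by auto
    qed
  qed
  hence "emeasure lborel ({0..1} \<inter> {x. s < frac (x - c)}) \<le> emeasure lborel {c+s-1<..<c}"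
    by (intro emeasure_mono) auto
  also have "\<dots> = ennreal (1 - s)"
    using False c s by simp
  finally show ?thesis .
qed
lemma frac_meas[measurable]: "frac \<in> borel_measurable (borel::real measure)"
proof -
  have "(\<lambda>x::real. x - real_of_int \<lfloor>x\<rfloor>) \<in> borel_measurable borel" by measurable
  moreover have "(\<lambda>x::real. x - real_of_int \<lfloor>x\<rfloor>) = frac" by (auto simp: frac_def)
  ultimately show ?thesis by simp
qed
lemma sets_node: "sets node_space = sets (borel \<Otimes>\<^sub>M count_space (UNIV::bool set))"
  unfolding node_space_def
  by (intro sets_pair_measure_cong) (auto simp: sets_uniform_count_measure)
lemma hit_meas[measurable]: "(\<lambda>p. hit_time v c p) \<in> borel_measurable node_space"
  unfolding measurable_cong_sets[OF sets_node refl] hit_time_def by measurable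

lemma prob_C: "prob_space (uniform_count_measure (UNIV::bool set))"
  by (rule prob_space_uniform_count_measure) auto
lemma prob_U: "prob_space (uniform_measure lborel {0..1::real})"
  by (rule prob_space_uniform_measure) auto
lemma prob_node: "prob_space node_space"
  unfolding node_space_def using prob_C prob_U by (intro prob_space_pair) 

lemma U_bound:
  assumes "A \<in> sets borel"
  shows "emeasure (uniform_measure lborel {0..1::real}) A = emeasure lborel ({0..1} \<inter> A)"
  using assms by (subst emeasure_uniform_measure) (auto simp: divide_ennreal_def)

lemma node_bound:
  assumes c: "0 \<le> c" "c \<le> 1" and v: "v > 0" and t: "t \<ge> 0"
  shows "emeasure node_space {p \<in> space node_space. t < hit_time v c p} \<le> ennreal (exp (- (v * t)))"
proof (cases "v * t < 1")
  case False
  have "{p \<in> space node_space. t < hit_time v c p} = {}"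
  proof (safe)
    fix x assume "t < hit_time v c x"
    moreover have "hit_time v c x < 1 / v"
      using v frac_rng by (simp add: hit_time_def divide_strict_right_mono)
    ultimately have "t < 1 / v" by linarith
    hence "v * t < 1" using v by (simp add: field_simps)
    thus "x \<in> {}" using v False by simp
  qed
  hence "emeasure node_space {p \<in> space node_space. t < hit_time v c p} = 0" by (simp only: emeasure_empty)
  thus ?thesis by simp
next
  case True
  define s where "s = v * t"
  have s: "0 \<le> s" "s < 1" using True v t by (auto simp: s_def)
  define A1 where "A1 = {x. s < frac (c - x)}"
  define A2 where "A2 = {x. s < frac (x - c)}"
  have A1m: "A1 \<in> sets borel" unfolding A1_def by measurable
  have A2m: "A2 \<in> sets borel" unfolding A2_def by measurable
  interpret C: prob_space "uniform_count_measure (UNIV::bool set)" by (rule prob_C)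
  have half: "emeasure (uniform_count_measure (UNIV::bool set)) {d} = ennreal (1/2)" for d
    by (subst emeasure_uniform_count_measure) (auto simp: ennreal_divide_numeral)
  have sub: "{p \<in> space node_space. t < hit_time v c p} \<subseteq> A1 \<times> {True} \<union> A2 \<times> {False}"
  proof
    fix p assume "p \<in> {p \<in> space node_space. t < hit_time v c p}"
    hence "t < hit_time v c p" by simp
    hence "v * t < v * hit_time v c p" using v by simp
    hence "s < (if snd p then frac (c - fst p) else frac (fst p - c))"
      using v by (simp add: s_def hit_time_def)
    thus "p \<in> A1 \<times> {True} \<union> A2 \<times> {False}"
      by (cases p) (auto simp: A1_def A2_def split: if_splits)
  qed
  have "emeasure node_space {p \<in> space node_space. t < hit_time v c p}
      \<le> emeasure node_space (A1 \<times> {True} \<union> A2 \<times> {False})"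
    using sub A1m A2m by (intro emeasure_mono) (auto simp: sets_node)
  also have "\<dots> \<le> emeasure node_space (A1 \<times> {True}) + emeasure node_space (A2 \<times> {False})"
    using A1m A2m by (intro emeasure_subadditive) (auto simp: sets_node)
  also have "emeasure node_space (A1 \<times> {True}) = emeasure lborel ({0..1} \<inter> A1) * ennreal (1/2)"
    unfolding node_space_def
    using A1m by (subst C.emeasure_pair_measure_Times) (auto simp: U_bound half divide_ennreal_def)
  also have "emeasure node_space (A2 \<times> {False}) = emeasure lborel ({0..1} \<inter> A2) * ennreal (1/2)"
    unfolding node_space_def
    using A2m by (subst C.emeasure_pair_measure_Times) (auto simp: U_bound half divide_ennreal_def)
  also have "emeasure lborel ({0..1} \<inter> A1) * ennreal (1/2) + emeasure lborel ({0..1} \<inter> A2) * ennreal (1/2)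
     \<le> ennreal (1 - s) * ennreal (1/2) + ennreal (1 - s) * ennreal (1/2)"
    using len1[OF c s] len2[OF c s] unfolding A1_def A2_def
    by (intro add_mono mult_right_mono) auto
  also have "\<dots> = ennreal (1 - s) * (ennreal (1/2) + ennreal (1/2))"
    by (simp only: distrib_left)
  also have "ennreal (1/2) + ennreal (1/2) = 1"
    by (subst ennreal_plus[symmetric]) auto
  also have "ennreal (1 - s) * 1 = ennreal (1 - s)" by simp
  also have "\<dots> \<le> ennreal (exp (- (v * t)))"
    using exp_ge_add_one_self[of "-s"] by (simp add: s_def)
  finally show ?thesis .
qed

lemma exp_int:
  assumes L: "L > 0"
  shows "(\<integral>\<^sup>+ t. ennreal (indicator {0..} t * exp (- (L * t))) \<partial>lborel) = ennreal (1 / L)"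
proof -
  interpret E: prob_space "density lborel (exponential_density L)"
    using prob_space_exponential_density[OF L] .
  have "1 = emeasure (density lborel (exponential_density L)) UNIV"
    using E.emeasure_space_1 by simp
  also have "\<dots> = (\<integral>\<^sup>+ t. ennreal (exponential_density L t) \<partial>lborel)"
    by (subst emeasure_density) auto
  finally have one: "(\<integral>\<^sup>+ t. ennreal (exponential_density L t) \<partial>lborel) = 1" by simp
  have "(\<integral>\<^sup>+ t. ennreal (indicator {0..} t * exp (- (L * t))) \<partial>lborel)
      = (\<integral>\<^sup>+ t. ennreal (exponential_density L t) * ennreal (1 / L) \<partial>lborel)"
    using L by (intro nn_integral_cong)
      (auto simp: exponential_density_def ennreal_mult[symmetric] indicator_def mult.commute)
  also have "\<dots> = (\<integral>\<^sup>+ t. ennreal (exponential_density L t) \<partial>lborel) * ennreal (1 / L)"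
    by (rule nn_integral_multc) measurable
  also have "\<dots> = ennreal (1 / L)" using one by simp
  finally show ?thesis .
qed

theorem lemma4:
  fixes v a b :: real and ni nj :: nat
  assumes "v > 0" and "ni > 0" and "nj > 0"
    and "a \<in> {0..1}" and "b \<in> {0..1}"
  shows "I_pass v ni nj a b \<le> 1 / (v * real (ni + nj))"
proof -
  note v = assms(1)
  define n where "n = ni + nj"
  define P where "P = PiM {..<n} (\<lambda>_. node_space)"
  define cc where "cc k = (if k < ni then a else b)" for k
  define m where "m = passage_time v ni nj a b"
  have cc01: "0 \<le> cc k" "cc k \<le> 1" for k using assms(4,5) by (auto simp: cc_def)
  have npos: "n > 0" using assms(2) by (simp add: n_def)
  have m_eq: "m \<omega> = Min ((\<lambda>k. hit_time v (cc k) (\<omega> k)) ` {..<n})" for \<omega>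
    unfolding m_def passage_time_def n_def cc_def by (intro arg_cong[where f=Min]) auto
  have m_meas: "m \<in> borel_measurable P"
    unfolding m_eq[abs_def] P_def by measurable
  have hit_nn: "0 \<le> hit_time v c p" for c p
    using v frac_rng by (simp add: hit_time_def)
  have m_nn: "0 \<le> m \<omega>" for \<omega>
    unfolding m_eq using npos by (subst Min_ge_iff) (auto simp: hit_nn)
  interpret PP: product_prob_space "\<lambda>_. node_space" "{..<n}"
    using prob_node prob_space_imp_sigma_finite
    by (simp add: product_prob_space_def product_sigma_finite_def product_prob_space_axioms_def)
  interpret Pp: prob_space P unfolding P_def by (rule prob_space_PiM) (rule prob_node)
  interpret pair_sigma_finite P lborel by unfold_locales
  note m_meas[measurable]
  define F where "F = (\<lambda>x. if 0 \<le> snd x \<and> snd x < m (fst x) then 1 else (0::ennreal))"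
  have F_meas: "F \<in> borel_measurable (P \<Otimes>\<^sub>M lborel)"
    unfolding F_def by measurable
  have "(\<integral>\<^sup>+ \<omega>. ennreal (m \<omega>) \<partial>P) = (\<integral>\<^sup>+ \<omega>. (\<integral>\<^sup>+ t. F (\<omega>, t) \<partial>lborel) \<partial>P)"
  proof (intro nn_integral_cong)
    fix \<omega>
    have "(\<integral>\<^sup>+ t. F (\<omega>, t) \<partial>lborel) = (\<integral>\<^sup>+ t. indicator {0..<m \<omega>} t \<partial>lborel)"
      by (intro nn_integral_cong) (auto simp: F_def indicator_def)
    also have "\<dots> = ennreal (m \<omega>)" using m_nn[of \<omega>] by simp
    finally show "ennreal (m \<omega>) = (\<integral>\<^sup>+ t. F (\<omega>, t) \<partial>lborel)" by simp
  qed
  also have "\<dots> = (\<integral>\<^sup>+ t. (\<integral>\<^sup>+ \<omega>. F (\<omega>, t) \<partial>P) \<partial>lborel)"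
    using Fubini'[of "\<lambda>\<omega> t. F (\<omega>, t)"] F_meas by simp
  also have "\<dots> \<le> (\<integral>\<^sup>+ t. ennreal (indicator {0..} t * exp (- ((v * real n) * t))) \<partial>lborel)"
  proof (intro nn_integral_mono)
    fix t :: real
    show "(\<integral>\<^sup>+ \<omega>. F (\<omega>, t) \<partial>P) \<le> ennreal (indicator {0..} t * exp (- ((v * real n) * t)))"
    proof (cases "0 \<le> t")
      case False
      thus ?thesis by (simp add: F_def)
    next
      case True
      define B where "B k = {p \<in> space node_space. t < hit_time v (cc k) p}" for k
      have Bm: "B k \<in> sets node_space" for k unfolding B_def by measurable
      have minchar: "t < m \<omega> \<longleftrightarrow> (\<forall>k\<in>{..<n}. t < hit_time v (cc k) (\<omega> k))" for \<omega>
        unfolding m_eq using npos by (subst Min_gr_iff) auto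
      have set_eq: "{\<omega> \<in> space P. t < m \<omega>} = {\<omega> \<in> space P. \<forall>k\<in>{..<n}. \<omega> k \<in> B k}"
        unfolding minchar B_def P_def by (auto simp: space_PiM PiE_iff)
      have Sm: "{\<omega> \<in> space P. t < m \<omega>} \<in> sets P" using m_meas by measurable
      have "(\<integral>\<^sup>+ \<omega>. F (\<omega>, t) \<partial>P) = (\<integral>\<^sup>+ \<omega>. indicator {\<omega> \<in> space P. t < m \<omega>} \<omega> \<partial>P)"
        using True by (intro nn_integral_cong) (auto simp: F_def indicator_def)
      also have "\<dots> = emeasure P {\<omega> \<in> space P. t < m \<omega>}"
        using Sm by simp
      also have "\<dots> = (\<Prod>k\<in>{..<n}. emeasure node_space (B k))"
      proof -
        have "emeasure P {\<omega> \<in> space P. \<forall>k\<in>{..<n}. \<omega> k \<in> B k} = (\<Prod>k\<in>{..<n}. emeasure node_space (B k))"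
          unfolding P_def using Bm by (intro PP.emeasure_PiM_Collect) auto
        thus ?thesis using set_eq by simp
      qed
      also have "\<dots> \<le> (\<Prod>k\<in>{..<n}. ennreal (exp (- (v * t))))"
        unfolding B_def using cc01 v True by (intro prod_mono_ennreal node_bound) auto
      also have "\<dots> = ennreal (exp (- (v * t)) ^ n)"
        by (simp add: ennreal_power)
      also have "exp (- (v * t)) ^ n = exp (- ((v * real n) * t))"
        by (simp add: exp_of_nat_mult[symmetric] algebra_simps)
      finally show ?thesis using True by simp
    qed
  qed
  also have "\<dots> = ennreal (1 / (v * real n))"
    using v npos by (intro exp_int) simp
  finally have bound: "(\<integral>\<^sup>+ \<omega>. ennreal (m \<omega>) \<partial>P) \<le> ennreal (1 / (v * real n))" .
  have "I_pass v ni nj a b = integral\<^sup>L P m"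
    unfolding I_pass_def P_def m_def n_def by simp
  also have "\<dots> \<le> 1 / (v * real n)"
    using bound v by (intro integral_real_bounded) auto
  finally show ?thesis by (simp add: n_def)
qed
end
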